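(* Let \textsc{Min-CSP} be a constraint satisfaction problem whose objective is to minimize the number of violated constraints, and let \textsc{Max-Comp-CSP} be the complementary problem of maximizing the number of satisfied constraints on the same instances. If there exists a PTAS for \textsc{Max-Comp-CSP} and a super robust algorithm for \textsc{Min-CSP}, then there exists a PTAS for \textsc{Min-CSP}.
   Context: For an instance with $C$ constraints, it is $(1-\varepsilon)$-satisfiable if some assignment satisfies at least $(1-\varepsilon)C$ constraints. A super robust algorithm for \textsc{Min-CSP} is a polynomial-time algorithm whose running time does not depend on $\varepsilon$ and which, on every $(1-\varepsilon)$-satisfiable instance with $C$ constraints, outputs an assignment violating at most $(\varepsilon+O(\varepsilon^2))C$ constraints (the constant in $O(\varepsilon^2)$ being independent of the instance). A PTAS for a minimization (resp. maximization) problem is a family of polynomial-time algorithms that, for every fixed $\tau>0$, output a solution of value at most $(1+\tau)$ (resp. at least $(1-\tau)$) times the optimum. *)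

theory Defs
  imports Complex_Main
begin

(* A CSP is given abstractly: every instance I :: 'i has a list of constraints
   cons I (each a predicate on assignments; repetitions allowed) and a set of
   admissible assignments Asg I.
   Poly is the class of polynomial-time algorithms. *)

definition nviol :: "('i \<Rightarrow> ('a \<Rightarrow> bool) list) \<Rightarrow> 'i \<Rightarrow> 'a \<Rightarrow> nat" where
  "nviol cons I x = length (filter (\<lambda>c. \<not> c x) (cons I))"

definition nsat :: "('i \<Rightarrow> ('a \<Rightarrow> bool) list) \<Rightarrow> 'i \<Rightarrow> 'a \<Rightarrow> nat" where
  "nsat cons I x = length (filter (\<lambda>c. c x) (cons I))"

definition ncons :: "('i \<Rightarrow> ('a \<Rightarrow> bool) list) \<Rightarrow> 'i \<Rightarrow> nat" where
  "ncons cons I = length (cons I)"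

definition min_opt :: "('i \<Rightarrow> ('a \<Rightarrow> bool) list) \<Rightarrow> ('i \<Rightarrow> 'a set) \<Rightarrow> 'i \<Rightarrow> nat" where
  "min_opt cons Asg I = Min (nviol cons I ` Asg I)"

definition max_opt :: "('i \<Rightarrow> ('a \<Rightarrow> bool) list) \<Rightarrow> ('i \<Rightarrow> 'a set) \<Rightarrow> 'i \<Rightarrow> nat" where
  "max_opt cons Asg I = Max (nsat cons I ` Asg I)"

definition eps_satisfiable ::
  "('i \<Rightarrow> ('a \<Rightarrow> bool) list) \<Rightarrow> ('i \<Rightarrow> 'a set) \<Rightarrow> 'i \<Rightarrow> real \<Rightarrow> bool" where
  "eps_satisfiable cons Asg I \<epsilon> \<longleftrightarrow>
     (\<exists>x\<in>Asg I. real (nsat cons I x) \<ge> (1 - \<epsilon>) * real (ncons cons I))"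

definition super_robust ::
  "('i \<Rightarrow> ('a \<Rightarrow> bool) list) \<Rightarrow> ('i \<Rightarrow> 'a set) \<Rightarrow> ('i \<Rightarrow> 'a) set \<Rightarrow> ('i \<Rightarrow> 'a) \<Rightarrow> bool" where
  "super_robust cons Asg Poly A \<longleftrightarrow>
     A \<in> Poly \<and> (\<forall>I. A I \<in> Asg I) \<and>
     (\<exists>K::real. K \<ge> 0 \<and> (\<forall>I \<epsilon>. eps_satisfiable cons Asg I \<epsilon> \<longrightarrow>
        real (nviol cons I (A I)) \<le> (\<epsilon> + K * \<epsilon>\<^sup>2) * real (ncons cons I)))"

definition ptas_min ::
  "('i \<Rightarrow> ('a \<Rightarrow> bool) list) \<Rightarrow> ('i \<Rightarrow> 'a set) \<Rightarrow> ('i \<Rightarrow> 'a) set \<Rightarrow> bool" where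
  "ptas_min cons Asg Poly \<longleftrightarrow>
     (\<forall>\<tau>::real. \<tau> > 0 \<longrightarrow> (\<exists>A\<in>Poly. \<forall>I. A I \<in> Asg I \<and>
        real (nviol cons I (A I)) \<le> (1 + \<tau>) * real (min_opt cons Asg I)))"

definition ptas_max ::
  "('i \<Rightarrow> ('a \<Rightarrow> bool) list) \<Rightarrow> ('i \<Rightarrow> 'a set) \<Rightarrow> ('i \<Rightarrow> 'a) set \<Rightarrow> bool" where
  "ptas_max cons Asg Poly \<longleftrightarrow>
     (\<forall>\<tau>::real. \<tau> > 0 \<longrightarrow> (\<exists>A\<in>Poly. \<forall>I. A I \<in> Asg I \<and>
        real (nsat cons I (A I)) \<ge> (1 - \<tau>) * real (max_opt cons Asg I)))"

definition better_of ::
  "('i \<Rightarrow> ('a \<Rightarrow> bool) list) \<Rightarrow> ('i \<Rightarrow> 'a) \<Rightarrow> ('i \<Rightarrow> 'a) \<Rightarrow> 'i \<Rightarrow> 'a" where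
  "better_of cons A B = (\<lambda>I. if nviol cons I (A I) \<le> nviol cons I (B I) then A I else B I)"

end

theory Submission
  imports Defs
begin

lemma nviol_nsat: "nviol cons I x + nsat cons I x = ncons cons I"
  unfolding nviol_def nsat_def ncons_def
  using sum_length_filter_compl[of "\<lambda>c. c x" "cons I"] by simp

lemma arith_core:
  fixes C m r1 r2 K \<tau> :: real
  assumes C: "C \<ge> 0" and m: "0 \<le> m" "m \<le> C" and K: "K \<ge> 0" and t: "\<tau> > 0"
    and r1: "r1 * C \<le> (m + (K+1) * m^2 / C) * C" "r1 \<le> C"
    and r2: "r2 \<le> m + \<tau>^2/(K+1) * C"
  shows "min r1 r2 \<le> (1+\<tau>) * m"
proof (cases "m * (K+1) \<le> \<tau> * C")
  case True
  show ?thesis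
  proof (cases "C = 0")
    case True then show ?thesis using r1 m by simp
  next
    case False
    hence Cp: "C > 0" using C by simp
    have "r1 \<le> m + (K+1) * m^2 / C" using r1(1) Cp by simp
    also have "(K+1) * m^2 / C = m * (m * (K+1) / C)" by (simp add: power2_eq_square field_simps)
    also have "m * (m * (K+1) / C) \<le> m * \<tau>"
      using True Cp m by (intro mult_left_mono) (simp_all add: divide_simps)
    finally show ?thesis by (simp add: algebra_simps)
  qed
next
  case False
  have "\<tau>^2/(K+1) * C = \<tau> * (\<tau> * C / (K+1))" by (simp add: power2_eq_square field_simps)
  also have "\<dots> \<le> \<tau> * m" using False K t
    by (intro mult_left_mono) (simp_all add: divide_simps mult.commute)
  finally show ?thesis using r2 by (simp add: algebra_simps)
qed

theorem mainTheorem9: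
  fixes cons :: "'i \<Rightarrow> ('a \<Rightarrow> bool) list"
    and Asg :: "'i \<Rightarrow> 'a set"
    and Poly :: "('i \<Rightarrow> 'a) set"
  assumes fin: "\<And>I. finite (Asg I) \<and> Asg I \<noteq> {}"
    and poly_better: "\<And>A B. A \<in> Poly \<Longrightarrow> B \<in> Poly \<Longrightarrow> better_of cons A B \<in> Poly"
    and ptas: "ptas_max cons Asg Poly"
    and robust: "\<exists>A. super_robust cons Asg Poly A"
  shows "ptas_min cons Asg Poly"
  unfolding ptas_min_def
proof (intro allI impI)
  fix \<tau> :: real assume t: "\<tau> > 0"
  obtain R K where R: "R \<in> Poly" "\<And>I. R I \<in> Asg I" and K: "K \<ge> 0"
    and RK: "\<And>I \<epsilon>. eps_satisfiable cons Asg I \<epsilon> \<Longrightarrow>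
        real (nviol cons I (R I)) \<le> (\<epsilon> + K * \<epsilon>\<^sup>2) * real (ncons cons I)"
    using robust unfolding super_robust_def by blast
  have "\<tau>^2/(K+1) > 0" using t K by simp
  then obtain B where B: "B \<in> Poly" and BI: "\<And>I. B I \<in> Asg I \<and>
        real (nsat cons I (B I)) \<ge> (1 - \<tau>^2/(K+1)) * real (max_opt cons Asg I)"
    using ptas unfolding ptas_max_def by blast
  show "\<exists>A\<in>Poly. \<forall>I. A I \<in> Asg I \<and>
        real (nviol cons I (A I)) \<le> (1 + \<tau>) * real (min_opt cons Asg I)"
  proof (intro bexI allI conjI)
    show "better_of cons R B \<in> Poly" using poly_better R B by blast
    fix I
    show "better_of cons R B I \<in> Asg I" using R BI unfolding better_of_def by simp
    define C where "C = real (ncons cons I)"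
    define m where "m = real (min_opt cons Asg I)"
    define M where "M = real (max_opt cons Asg I)"
    define \<delta> where "\<delta> = \<tau>^2/(K+1)"
    have fI: "finite (Asg I)" "Asg I \<noteq> {}" using fin by auto
    obtain x where x: "x \<in> Asg I" "nviol cons I x = min_opt cons Asg I"
      using Min_in[of "nviol cons I ` Asg I"] fI unfolding min_opt_def by (metis finite_imageI image_iff image_is_empty)
    obtain y where y: "y \<in> Asg I" "nsat cons I y = max_opt cons Asg I"
      using Max_in[of "nsat cons I ` Asg I"] fI unfolding max_opt_def by (metis finite_imageI image_iff image_is_empty)
    have Mge: "nsat cons I x \<le> max_opt cons Asg I"
      using fI x unfolding max_opt_def by auto
    have mC: "m \<le> C" using nviol_nsat[of cons I x] x unfolding m_def C_def by linarith
    have MC: "M \<le> C" using nviol_nsat[of cons I y] y unfolding M_def C_def by linarith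
    have MCm: "C - m \<le> M" using nviol_nsat[of cons I x] x Mge unfolding m_def C_def M_def
      by (metis add_diff_cancel_left' of_nat_add of_nat_le_iff add.commute diff_le_eq)
    have m0: "m \<ge> 0" "C \<ge> 0" unfolding m_def C_def by auto
    define r1 where "r1 = real (nviol cons I (R I))"
    define r2 where "r2 = real (nviol cons I (B I))"
    have r1C: "r1 \<le> C" using nviol_nsat[of cons I "R I"] unfolding r1_def C_def by linarith
    have r1b: "r1 * C \<le> (m + (K+1) * m^2 / C) * C"
    proof (cases "C = 0")
      case True then show ?thesis by simp
    next
      case False
      hence Cp: "C > 0" using m0 by simp
      have es: "eps_satisfiable cons Asg I (m / C)"
        unfolding eps_satisfiable_def
      proof (rule bexI[OF _ x(1)])
        have "real (nsat cons I x) = C - m" using nviol_nsat[of cons I x] x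
          unfolding C_def m_def by (metis add_diff_cancel_left' of_nat_add)
        also have "C - m = (1 - m/C) * C" using Cp by (simp add: field_simps)
        finally show "(1 - m / C) * real (ncons cons I) \<le> real (nsat cons I x)"
          unfolding C_def by simp
      qed
      have "r1 \<le> (m/C + K * (m/C)^2) * C" using RK[OF es] unfolding r1_def C_def by simp
      also have "\<dots> = m + K * m^2 / C" using Cp by (simp add: field_simps power2_eq_square)
      also have "\<dots> \<le> m + (K+1) * m^2 / C" using Cp by (intro add_left_mono divide_right_mono mult_right_mono) auto
      finally show ?thesis using Cp by simp
    qed
    have r2b: "r2 \<le> m + \<tau>^2/(K+1) * C"
    proof -
      have s: "r2 = C - real (nsat cons I (B I))" using nviol_nsat[of cons I "B I"]
        unfolding r2_def C_def by (metis add_diff_cancel_right' of_nat_add)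
      have nb: "real (nsat cons I (B I)) \<ge> (1 - \<delta>) * M" using BI unfolding M_def \<delta>_def by simp
      have d0: "\<delta> \<ge> 0" unfolding \<delta>_def using K by simp
      have "C - (1-\<delta>) * M \<le> m + \<delta> * C"
      proof (cases "\<delta> \<le> 1")
        case True
        have "(1-\<delta>) * (C - m) \<le> (1-\<delta>) * M" using True MCm by (intro mult_left_mono) auto
        moreover have "\<delta> * m \<ge> 0" using d0 m0 by simp
        ultimately show ?thesis by (simp add: algebra_simps)
      next
        case False
        have "(\<delta>-1) * M \<le> (\<delta>-1) * C" using False MC by (intro mult_left_mono) auto
        then show ?thesis using m0 by (simp add: algebra_simps)
      qed
      then show ?thesis using s nb unfolding \<delta>_def by linarith
    qed
    have "min r1 r2 \<le> (1+\<tau>) * m"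
      by (rule arith_core[OF m0(2) m0(1) mC K t r1b r1C r2b])
    moreover have "real (nviol cons I (better_of cons R B I)) = min r1 r2"
      unfolding better_of_def r1_def r2_def by auto
    ultimately show "real (nviol cons I (better_of cons R B I)) \<le> (1 + \<tau>) * real (min_opt cons Asg I)"
      unfolding m_def by simp
  qed
qed

end
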